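(* Let $\kappa$ be an algebraically closed field of characteristic zero, complete for a non-trivial non-Archimedean absolute value. Let $a,b\in\kappa$ with $a\ne0$ and $|a|\le1$, and let $L(z)=az+b$. Let $f\in\mathcal{A}(\kappa)$ be an entire function, not identically zero, and let $m$ be a positive integer. Then for every $r>|b|/|a|$, $$\mu(r,f\circ L)\le\mu(r,f),\qquad \mu\!\left(r,\frac{f\circ L}{f}\right)\le1,\qquad \mu\!\left(r,\frac{\Delta_L^mf}{f}\right)\le1.$$
   Context: $\mathcal{A}(\kappa)$ is the ring of entire functions over $\kappa$: power series $\sum_{n\ge0}a_nz^n$ with $a_n\in\kappa$ converging on all of $\kappa$. For such $g$, $\mu(r,g)=\max_n|a_n|r^n$; for a meromorphic $g/h$ ($g,h$ entire, $h\not\equiv0$), $\mu(r,g/h)=\mu(r,g)/\mu(r,h)$. The difference operators are $\Delta_Lf=f\circ L-f$ and $\Delta_L^mf=\Delta_L(\Delta_L^{m-1}f)$ (with $\Delta_L^1=\Delta_L$). *)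

theory Defs
  imports "HOL-Analysis.Analysis" "HOL-Computational_Algebra.Polynomial"
begin

definition nonarch_abs :: "('k::field \<Rightarrow> real) \<Rightarrow> bool" where
  "nonarch_abs av \<longleftrightarrow>
     (\<forall>x. av x \<ge> 0) \<and> (\<forall>x. av x = 0 \<longleftrightarrow> x = 0) \<and>
     (\<forall>x y. av (x * y) = av x * av y) \<and>
     (\<forall>x y. av (x + y) \<le> max (av x) (av y))"

definition nontrivial_abs :: "('k::field \<Rightarrow> real) \<Rightarrow> bool" where
  "nontrivial_abs av \<longleftrightarrow> (\<exists>x. x \<noteq> 0 \<and> av x \<noteq> 1)"

definition conv_abs :: "('k::field \<Rightarrow> real) \<Rightarrow> (nat \<Rightarrow> 'k) \<Rightarrow> 'k \<Rightarrow> bool" where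
  "conv_abs av s l \<longleftrightarrow> (\<lambda>n. av (s n - l)) \<longlonglongrightarrow> 0"

definition complete_abs :: "('k::field \<Rightarrow> real) \<Rightarrow> bool" where
  "complete_abs av \<longleftrightarrow>
     (\<forall>s. (\<forall>e>0. \<exists>N. \<forall>m\<ge>N. \<forall>n\<ge>N. av (s m - s n) < e) \<longrightarrow> (\<exists>l. conv_abs av s l))"

definition alg_closed_field :: "'k::field itself \<Rightarrow> bool" where
  "alg_closed_field _ \<longleftrightarrow> (\<forall>p :: 'k poly. degree p > 0 \<longrightarrow> (\<exists>x. poly p x = 0))"

text \<open>The power series with coefficients c converges at every point of the field,
  with sum F z: c is an entire function whose associated function is F.\<close>
definition entire_repr :: "('k::field \<Rightarrow> real) \<Rightarrow> (nat \<Rightarrow> 'k) \<Rightarrow> ('k \<Rightarrow> 'k) \<Rightarrow> bool" where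
  "entire_repr av c F \<longleftrightarrow> (\<forall>z. conv_abs av (\<lambda>N. \<Sum>n<N. c n * z ^ n) (F z))"

definition mu :: "('k::field \<Rightarrow> real) \<Rightarrow> real \<Rightarrow> (nat \<Rightarrow> 'k) \<Rightarrow> real" where
  "mu av r c = (SUP n. av (c n) * r ^ n)"

definition diffL :: "('k \<Rightarrow> 'k) \<Rightarrow> ('k \<Rightarrow> 'k::ab_group_add) \<Rightarrow> ('k \<Rightarrow> 'k)" where
  "diffL L g = (\<lambda>z. g (L z) - g z)"

end

theory Submission
  imports Defs
begin

locale na = fixes av :: "'k::field_char_0 \<Rightarrow> real" assumes na: "nonarch_abs av"
begin

lemma nonneg[simp]: "av x \<ge> 0" using na unfolding nonarch_abs_def by blast
lemma zero_iff[simp]: "av x = 0 \<longleftrightarrow> x = 0" using na unfolding nonarch_abs_def by blast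
lemma mult: "av (x*y) = av x * av y" using na unfolding nonarch_abs_def by blast
lemma ultra: "av (x+y) \<le> max (av x) (av y)" using na unfolding nonarch_abs_def by blast
lemma av0[simp]: "av 0 = 0" by simp
lemma one[simp]: "av 1 = 1"
proof -
  have "av 1 = av 1 * av 1" using mult[of 1 1] by simp
  moreover have "av 1 \<noteq> 0" by simp
  ultimately show ?thesis by simp
qed
lemma minus[simp]: "av (-x) = av x"
proof -
  have "av (-1) * av (-1) = 1" using mult[of "-1" "-1"] by simp
  moreover have "av (-1) \<ge> 0" by simp
  ultimately have "av (-1) = 1"
  proof -
    assume a: "av (-1) * av (-1) = 1" "av (-1) \<ge> 0"
    have "(av (-1) - 1) * (av (-1) + 1) = 0" using a(1) by (simp add: algebra_simps)
    thus ?thesis using a(2) by simp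
  qed
  thus ?thesis using mult[of "-1" x] by simp
qed
lemma diff_comm: "av (x - y) = av (y - x)" by (metis minus minus_diff_eq)
lemma powr[simp]: "av (x^n) = av x ^ n" by (induct n) (auto simp: mult)
lemma of_nat_le1: "av (of_nat n) \<le> 1"
proof (induct n)
  case (Suc n) thus ?case using ultra[of 1 "of_nat n"] by simp
qed simp
lemma diff_tri: "av (x - y) \<le> max (av (x - z)) (av (z - y))"
  using ultra[of "x - z" "z - y"] by simp
lemma diff_le: "av (x - y) \<le> max (av x) (av y)"
  using ultra[of x "-y"] by simp
lemma strict: assumes "av y < av x" shows "av (x + y) = av x"
proof -
  have "av (x + y) \<le> av x" using ultra[of x y] assms by simp
  moreover have "av x \<le> max (av (x+y)) (av y)" using ultra[of "x+y" "-y"] by simp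
  ultimately show ?thesis using assms by linarith
qed
lemma sum_le: assumes "B \<ge> 0" "\<And>i. i \<in> A \<Longrightarrow> av (f i) \<le> B" shows "av (sum f A) \<le> B"
proof (cases "finite A")
  case True thus ?thesis using assms(2)
  proof (induct A rule: finite_induct)
    case empty then show ?case using assms(1) by simp
  next
    case (insert x F)
    have a: "av (f x) \<le> B" "av (sum f F) \<le> B" using insert by auto
    show ?case using insert(1,2) by (simp add: order.trans[OF ultra[of "f x" "sum f F"]] a)
  qed
qed (use assms in simp)

lemma sandwich0: assumes "\<And>n. 0 \<le> f n" "\<And>n. f n \<le> g n" "g \<longlonglongrightarrow> 0" shows "f \<longlonglongrightarrow> (0::real)"
  by (rule tendsto_sandwich[of "\<lambda>_. 0" f sequentially g 0]) (use assms in auto)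

lemma conv_unique: assumes "conv_abs av s l" "conv_abs av s l'" shows "l = l'"
proof -
  have t: "(\<lambda>n. max (av (s n - l)) (av (s n - l'))) \<longlonglongrightarrow> max 0 0"
    using assms unfolding conv_abs_def by (intro tendsto_max)
  have "av (l - l') \<le> max (av (s n - l)) (av (s n - l'))" for n
    using diff_tri[of l l' "s n"] diff_comm[of l "s n"] by simp
  hence "av (l - l') \<le> max 0 0" by (intro LIMSEQ_le_const[OF t]) auto
  hence "av (l - l') = 0" using nonneg[of "l - l'"] by linarith
  thus ?thesis by simp
qed

lemma conv_bound: assumes "conv_abs av s l" "\<And>M. M \<ge> N \<Longrightarrow> av (s M - x) \<le> B"
  shows "av (l - x) \<le> B"
proof -
  have B0: "B \<ge> 0" using assms(2)[of N] nonneg[of "s N - x"] by linarith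
  have t: "(\<lambda>n. max (av (s n - l)) B) \<longlonglongrightarrow> max 0 B"
    using assms unfolding conv_abs_def by (intro tendsto_max) auto
  have "av (l - x) \<le> max (av (s n - l)) B" if "n \<ge> N" for n
    using diff_tri[of l x "s n"] diff_comm[of l "s n"] assms(2)[OF that] by simp
  hence "av (l - x) \<le> max 0 B" by (intro LIMSEQ_le_const[OF t]) auto
  thus ?thesis using B0 by simp
qed

lemma conv_cmult: assumes "conv_abs av s l" shows "conv_abs av (\<lambda>n. c * s n) (c * l)"
proof -
  have "(\<lambda>n. av c * av (s n - l)) \<longlonglongrightarrow> av c * 0"
    using assms unfolding conv_abs_def by (intro tendsto_mult) auto
  thus ?thesis unfolding conv_abs_def by (simp add: mult[symmetric] right_diff_distrib)
qed

lemma conv_diff: assumes "conv_abs av s l" "conv_abs av t m"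
  shows "conv_abs av (\<lambda>n. s n - t n) (l - m)"
proof -
  have g: "(\<lambda>n. max (av (s n - l)) (av (t n - m))) \<longlonglongrightarrow> max 0 0"
    using assms unfolding conv_abs_def by (intro tendsto_max)
  have "av ((s n - t n) - (l - m)) \<le> max (av (s n - l)) (av (t n - m))" for n
    using diff_le[of "s n - l" "t n - m"] by (simp add: algebra_simps)
  thus ?thesis unfolding conv_abs_def by (intro sandwich0[OF _ _ g[simplified]]) auto
qed

lemma terms0: assumes "conv_abs av (\<lambda>N. \<Sum>n<N. f n) l" shows "(\<lambda>n. av (f n)) \<longlonglongrightarrow> 0"
proof -
  let ?s = "\<lambda>N. \<Sum>n<N. f n"
  have h: "(\<lambda>n. av (?s (Suc n) - l)) \<longlonglongrightarrow> 0"
    using LIMSEQ_Suc[OF assms[unfolded conv_abs_def]] .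
  have g: "(\<lambda>n. max (av (?s (Suc n) - l)) (av (?s n - l))) \<longlonglongrightarrow> max 0 0"
    using assms h unfolding conv_abs_def by (intro tendsto_max) auto
  have "av (f n) \<le> max (av (?s (Suc n) - l)) (av (?s n - l))" for n
    using diff_tri[of "?s (Suc n)" "?s n" l] diff_comm[of l "?s n"] by simp
  thus ?thesis by (intro sandwich0[OF _ _ g[simplified]]) auto
qed

lemma cauchy: assumes "complete_abs av" "(\<lambda>n. av (f n)) \<longlonglongrightarrow> 0"
  shows "\<exists>l. conv_abs av (\<lambda>N. \<Sum>n<N. f n) l"
proof -
  let ?s = "\<lambda>N. \<Sum>n<N. f n"
  have "\<exists>N. \<forall>m\<ge>N. \<forall>n\<ge>N. av (?s m - ?s n) < e" if e: "e > 0" for e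
  proof -
    have "eventually (\<lambda>n. av (f n) < e/2) sequentially"
      using order_tendstoD(2)[OF assms(2), of "e/2"] e by linarith
    then obtain N where N: "\<And>n. n \<ge> N \<Longrightarrow> av (f n) < e/2"
      unfolding eventually_sequentially by blast
    have *: "av (?s m - ?s n) \<le> e/2" if "m \<ge> N" "n \<ge> N" "n \<le> m" for m n
    proof -
      have "?s m - ?s n = sum f ({..<m} - {..<n})" using that by (subst sum_diff) auto
      also have "av \<dots> \<le> e/2" using N that e by (intro sum_le) (auto intro: less_imp_le)
      finally show ?thesis .
    qed
    show ?thesis
    proof (intro exI allI impI)
      fix m n assume "m \<ge> N" "n \<ge> N"
      then have "av (?s m - ?s n) \<le> e/2"
        using *[of m n] *[of n m] diff_comm[of "?s m" "?s n"] by (cases "n \<le> m") auto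
      thus "av (?s m - ?s n) < e" using e by linarith
    qed
  qed
  hence "\<forall>e>0. \<exists>N. \<forall>m\<ge>N. \<forall>n\<ge>N. av (?s m - ?s n) < e" by blast
  thus ?thesis using assms(1) unfolding complete_abs_def by (elim allE[of _ ?s]) blast
qed

end
context na begin

lemma big_elem: assumes "nontrivial_abs av" shows "\<exists>y. av y > 1"
proof -
  obtain x where x: "x \<noteq> 0" "av x \<noteq> 1" using assms unfolding nontrivial_abs_def by blast
  show ?thesis
  proof (cases "av x > 1")
    case False
    hence lt: "av x < 1" "av x > 0" using x by (auto simp: less_le)
    have "av x * av (inverse x) = 1" using x mult[of x "inverse x"] by simp
    hence "av (inverse x) = 1 / av x" using lt by (auto simp: eq_divide_eq mult.commute)
    thus ?thesis using lt by (intro exI[of _ "inverse x"]) (simp add: field_simps)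
  qed blast
qed

lemma exists_ge: assumes "nontrivial_abs av" shows "\<exists>z. r \<le> av z"
proof -
  obtain y where "av y > 1" using big_elem[OF assms] by blast
  then obtain n where "r < av y ^ n" using real_arch_pow by blast
  thus ?thesis by (intro exI[of _ "y^n"]) simp
qed

lemma exists_small: assumes "nontrivial_abs av" "e > 0" shows "\<exists>z. z \<noteq> 0 \<and> av z < e"
proof -
  obtain y where y: "av y > 1" using big_elem[OF assms(1)] by blast
  then obtain n where n: "1/e < av y ^ n" using real_arch_pow by blast
  have y0: "y \<noteq> 0" using y by auto
  have "av (inverse (y^n)) * av (y^n) = 1" using mult[of "inverse (y^n)" "y^n"] y0 by simp
  hence eq: "av (inverse (y^n)) = 1 / av y ^ n" using y by (auto simp: eq_divide_eq mult.commute)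
  have pos: "av y ^ n > 0" using y by simp
  have "1 / av y ^ n < e" using n assms(2) pos by (simp add: field_simps)
  thus ?thesis using y0 eq by (intro exI[of _ "inverse (y^n)"]) simp
qed

lemma entire_terms0: assumes "nontrivial_abs av" "entire_repr av c F" "r \<ge> 0"
  shows "(\<lambda>n. av (c n) * r^n) \<longlonglongrightarrow> 0"
proof -
  obtain z where z: "r \<le> av z" using exists_ge[OF assms(1)] by blast
  have "(\<lambda>n. av (c n * z^n)) \<longlonglongrightarrow> 0"
    using terms0 assms(2) unfolding entire_repr_def by blast
  hence g: "(\<lambda>n. av (c n) * av z ^ n) \<longlonglongrightarrow> 0" by (simp add: mult)
  show ?thesis
  proof (rule sandwich0[OF _ _ g])
    fix n show "av (c n) * r ^ n \<le> av (c n) * av z ^ n"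
      using z assms(3) by (intro mult_left_mono power_mono) auto
  qed (use assms(3) in simp)
qed

lemma entire_bdd: assumes "nontrivial_abs av" "entire_repr av c F" "r \<ge> 0"
  shows "bdd_above (range (\<lambda>n. av (c n) * r^n))"
proof -
  have "Bseq (\<lambda>n. av (c n) * r^n)"
    using entire_terms0[OF assms] by (intro convergent_imp_Bseq) (auto simp: convergent_def)
  then obtain K where "\<And>n. norm (av (c n) * r^n) \<le> K" unfolding Bseq_def by blast
  hence "\<And>n. av (c n) * r^n \<le> K" by (metis abs_le_D1 real_norm_def)
  thus ?thesis by (intro bdd_aboveI2) 
qed

lemma mu_upper: assumes "nontrivial_abs av" "entire_repr av c F" "r \<ge> 0"
  shows "av (c n) * r^n \<le> mu av r c"
  unfolding mu_def by (rule cSUP_upper[OF _ entire_bdd[OF assms]]) simp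

lemma mu_least: assumes "\<And>n. av (c n) * r^n \<le> B" shows "mu av r c \<le> B"
  unfolding mu_def by (rule cSUP_least) (use assms in auto)

lemma mu_nonneg: assumes "nontrivial_abs av" "entire_repr av c F" "r \<ge> 0"
  shows "0 \<le> mu av r c"
  using order_trans[OF nonneg[of "c 0"] mu_upper[OF assms, of 0, simplified]] .

lemma mu_mono: assumes "nontrivial_abs av" "entire_repr av c F" "0 \<le> r" "r \<le> r'"
  shows "mu av r c \<le> mu av r' c"
proof (rule mu_least)
  fix n
  have "av (c n) * r^n \<le> av (c n) * r'^n" using assms(3,4) by (intro mult_left_mono power_mono) auto
  also have "\<dots> \<le> mu av r' c" using mu_upper[OF assms(1,2)] assms(3,4) by simp
  finally show "av (c n) * r^n \<le> mu av r' c" .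
qed

lemma entire_diff: assumes "entire_repr av d G" "entire_repr av e H"
  shows "entire_repr av (\<lambda>n. d n - e n) (\<lambda>z. G z - H z)"
  unfolding entire_repr_def
proof
  fix z
  have "conv_abs av (\<lambda>N. (\<Sum>n<N. d n * z^n) - (\<Sum>n<N. e n * z^n)) (G z - H z)"
    using assms unfolding entire_repr_def by (intro conv_diff) auto
  thus "conv_abs av (\<lambda>N. \<Sum>n<N. (d n - e n) * z ^ n) (G z - H z)"
    by (simp add: sum_subtractf left_diff_distrib)
qed

lemma entire_scale: assumes "entire_repr av e G"
  shows "entire_repr av (\<lambda>n. e n * a^n) (\<lambda>z. G (a*z))"
  unfolding entire_repr_def
proof
  fix z
  have "conv_abs av (\<lambda>N. \<Sum>n<N. e n * (a*z)^n) (G (a*z))" using assms unfolding entire_repr_def by blast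
  thus "conv_abs av (\<lambda>N. \<Sum>n<N. e n * a^n * z^n) (G (a*z))" by (simp add: power_mult_distrib mult.assoc)
qed

end
context na begin

lemma tail_le: fixes N M :: nat assumes "N \<le> M" "\<And>n. n \<ge> N \<Longrightarrow> av (g n) \<le> B" "B \<ge> 0"
  shows "av ((\<Sum>n<M. g n) - (\<Sum>n<N. g n)) \<le> B"
proof -
  have sub: "{..<N} \<subseteq> {..<M}" using assms(1) by auto
  have "sum g ({..<M} - {..<N}) = sum g {..<M} - sum g {..<N}" by (rule sum_diff[OF finite_lessThan sub])
  hence "(\<Sum>n<M. g n) - (\<Sum>n<N. g n) = sum g ({..<M} - {..<N})" by simp
  also have "av \<dots> \<le> B" using assms(2,3) by (intro sum_le) auto
  finally show ?thesis .
qed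

lemma entire_zero: assumes "nontrivial_abs av" "entire_repr av e (\<lambda>z. 0)" shows "e n = 0"
proof (rule ccontr)
  assume "e n \<noteq> 0"
  define k where "k = (LEAST k. e k \<noteq> 0)"
  have ek: "e k \<noteq> 0" unfolding k_def by (rule LeastI[of _ n]) fact
  have below: "e j = 0" if "j < k" for j using not_less_Least[of j "\<lambda>k. e k \<noteq> 0"] that k_def by blast
  define M0 where "M0 = mu av 1 e"
  have M0: "M0 \<ge> 0" "\<And>n. av (e n) \<le> M0" unfolding M0_def
    using mu_nonneg[OF assms(1,2), of 1] mu_upper[OF assms(1,2), of 1] by auto
  have aek: "av (e k) > 0" using ek by (simp add: less_le)
  define \<eta> where "\<eta> = min 1 (av (e k) / (M0 + 1))"
  have "\<eta> > 0" unfolding \<eta>_def using aek M0 by simp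
  then obtain z where z: "z \<noteq> 0" "av z < \<eta>" using exists_small[OF assms(1)] by blast
  define \<rho> where "\<rho> = av z"
  have z1: "av z < 1" "av z < av (e k) / (M0 + 1)" using z(2) unfolding \<eta>_def by auto
  have \<rho>: "0 < \<rho>" "\<rho> < 1" "\<rho> * (M0 + 1) < av (e k)"
  proof -
    have "av z \<noteq> 0" using z(1) by simp
    hence "av z > 0" using nonneg[of z] by linarith
    moreover have "av z * (M0 + 1) < av (e k)" using z1(2) M0(1) by (simp add: pos_less_divide_eq)
    ultimately show "0 < \<rho>" "\<rho> < 1" "\<rho> * (M0 + 1) < av (e k)" using z1(1) unfolding \<rho>_def by auto
  qed
  have "M0 * \<rho> \<le> \<rho> * (M0 + 1)" using \<rho>(1) by (simp add: algebra_simps)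
  hence "M0 * \<rho> < av (e k)" using \<rho>(3) by linarith
  hence BA: "M0 * \<rho>^(Suc k) < av (e k) * \<rho>^k" using \<rho> by (simp add: mult.commute mult.left_commute)
  define B where "B = M0 * \<rho>^(Suc k)"
  define A where "A = av (e k * z^k)"
  have A: "A = av (e k) * \<rho>^k" unfolding A_def \<rho>_def by (simp add: mult)
  have B0: "B \<ge> 0" unfolding B_def using M0 \<rho> by simp
  have sM: "av (\<Sum>n<M. e n * z^n) = A" if "M > k" for M
  proof -
    have "(\<Sum>n<M. e n * z^n) = e k * z^k + (\<Sum>n\<in>{..<M}-{k}. e n * z^n)"
      using that by (subst sum.remove[of _ k]) auto
    also have "av \<dots> = A"
    proof -
      have "av (\<Sum>n\<in>{..<M}-{k}. e n * z^n) \<le> B"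
      proof (rule sum_le[OF B0])
        fix n assume n: "n \<in> {..<M} - {k}"
        show "av (e n * z^n) \<le> B"
        proof (cases "n < k")
          case True thus ?thesis using below B0 by simp
        next
          case False
          hence "Suc k \<le> n" using n by auto
          hence "\<rho>^n \<le> \<rho>^(Suc k)" using \<rho> by (intro power_decreasing) auto
          hence "av (e n) * \<rho>^n \<le> M0 * \<rho>^(Suc k)"
            using M0 \<rho> by (intro mult_mono) auto
          thus ?thesis unfolding B_def \<rho>_def by (simp add: mult)
        qed
      qed
      hence "av (\<Sum>n\<in>{..<M}-{k}. e n * z^n) < av (e k * z^k)" using BA A A_def B_def by linarith
      thus ?thesis unfolding A_def by (rule strict)
    qed
    finally show ?thesis .
  qed
  have lim: "(\<lambda>M. av ((\<Sum>n<M. e n * z^n) - 0)) \<longlonglongrightarrow> 0"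
    using assms(2) unfolding entire_repr_def conv_abs_def by blast
  have "\<forall>M\<ge>Suc k. A \<le> av ((\<Sum>n<M. e n * z^n) - 0)" using sM by simp
  hence "\<exists>N. \<forall>M\<ge>N. A \<le> av ((\<Sum>n<M. e n * z^n) - 0)" by blast
  hence "A \<le> 0" by (rule LIMSEQ_le_const[OF lim])
  moreover have "A > 0" using A aek \<rho> by simp
  ultimately show False by simp
qed

lemma entire_unique: assumes "nontrivial_abs av" "entire_repr av d H" "entire_repr av d' H"
  shows "d = d'"
proof
  fix n
  have "entire_repr av (\<lambda>n. d n - d' n) (\<lambda>z. H z - H z)" by (rule entire_diff[OF assms(2,3)])
  hence "entire_repr av (\<lambda>n. d n - d' n) (\<lambda>z. 0)" by simp
  from entire_zero[OF assms(1) this] have "d n - d' n = 0" .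
  thus "d n = d' n" by simp
qed

lemma entire_nonzero: assumes "nontrivial_abs av" "entire_repr av c F" "F z \<noteq> 0" "r > 0"
  shows "mu av r c > 0"
proof -
  have "\<exists>k. c k \<noteq> 0"
  proof (rule ccontr)
    assume "\<not> ?thesis"
    hence "conv_abs av (\<lambda>N. \<Sum>n<N. c n * z^n) 0" unfolding conv_abs_def by simp
    moreover have "conv_abs av (\<lambda>N. \<Sum>n<N. c n * z^n) (F z)" using assms(2) unfolding entire_repr_def by blast
    ultimately have "0 = F z" by (rule conv_unique)
    thus False using assms(3) by simp
  qed
  then obtain k where k: "c k \<noteq> 0" by blast
  have "av (c k) \<noteq> 0" using k by simp
  hence "av (c k) > 0" using nonneg[of "c k"] by linarith
  hence "0 < av (c k) * r^k" using assms(4) by simp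
  also have "\<dots> \<le> mu av r c" using mu_upper[OF assms(1,2)] assms(4) by simp
  finally show ?thesis .
qed

end
context na begin

lemma conv_cmult_right: assumes "conv_abs av s l" shows "conv_abs av (\<lambda>n. s n * c) (l * c)"
  using conv_cmult[OF assms, of c] by (simp add: mult.commute)

lemma tb2: assumes "av b \<le> \<rho>" "0 \<le> w" "w \<le> \<rho>"
  shows "av (e n * of_nat (n choose k) * b^(n-k)) * w^k \<le> av (e n) * \<rho>^n"
proof (cases "k \<le> n")
  case False
  hence nk: "n choose k = 0" by (simp add: binomial_eq_0)
  have "\<rho> \<ge> 0" using assms(1) nonneg[of b] by linarith
  thus ?thesis unfolding nk by simp
next
  case True
  have r0: "\<rho> \<ge> 0" using assms(1) nonneg[of b] by linarith
  have "av (of_nat (n choose k) :: 'k) * av b^(n-k) * w^k \<le> 1 * \<rho>^(n-k) * \<rho>^k"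
    using assms of_nat_le1 by (intro mult_mono power_mono) auto
  also have "\<dots> = \<rho>^n" using True by (simp add: power_add[symmetric])
  finally have "av (of_nat (n choose k) :: 'k) * av b^(n-k) * w^k \<le> \<rho>^n" .
  hence "av (e n) * (av (of_nat (n choose k) :: 'k) * av b^(n-k) * w^k) \<le> av (e n) * \<rho>^n"
    by (intro mult_left_mono) auto
  thus ?thesis by (simp add: mult mult_ac)
qed

end
context na begin

lemma translate: assumes nt: "nontrivial_abs av" and cp: "complete_abs av" and E: "entire_repr av e G"
  shows "\<exists>d. entire_repr av d (\<lambda>z. G (z+b)) \<and> (\<forall>\<rho> k. av b < \<rho> \<longrightarrow> av (d k) * \<rho>^k \<le> mu av \<rho> e)"
proof -
  define f where "f k n = e n * of_nat (n choose k) * b^(n-k)" for k n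
  have ex: "\<exists>l. conv_abs av (\<lambda>N. \<Sum>n<N. f k n) l" for k
  proof (rule cauchy[OF cp])
    let ?R = "max (av b) 1"
    have g: "(\<lambda>n. av (e n) * ?R^n) \<longlonglongrightarrow> 0" by (rule entire_terms0[OF nt E]) simp
    show "(\<lambda>n. av (f k n)) \<longlonglongrightarrow> 0"
    proof (rule sandwich0[OF _ _ g])
      fix n show "av (f k n) \<le> av (e n) * ?R^n" using tb2[of b ?R 1 e n k] unfolding f_def by simp
    qed simp
  qed
  define d where "d k = (SOME l. conv_abs av (\<lambda>N. \<Sum>n<N. f k n) l)" for k
  have dc: "conv_abs av (\<lambda>N. \<Sum>n<N. f k n) (d k)" for k unfolding d_def by (rule someI_ex[OF ex])
  have bound: "av (d k) * \<rho>^k \<le> mu av \<rho> e" if "av b < \<rho>" for \<rho> k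
  proof -
    have \<rho>0: "\<rho> > 0" using that nonneg[of b] by linarith
    have "av (d k - 0) \<le> mu av \<rho> e / \<rho>^k"
    proof (rule conv_bound[OF dc, where N=0])
      fix M :: nat
      show "av ((\<Sum>n<M. f k n) - 0) \<le> mu av \<rho> e / \<rho>^k"
      proof -
        have "av (\<Sum>n<M. f k n) \<le> mu av \<rho> e / \<rho>^k"
        proof (rule sum_le)
          show "0 \<le> mu av \<rho> e / \<rho>^k" using mu_nonneg[OF nt E] \<rho>0 by simp
          fix n
          have "av (f k n) * \<rho>^k \<le> av (e n) * \<rho>^n" unfolding f_def
            using tb2[of b \<rho> \<rho> e n k] that \<rho>0 by simp
          also have "\<dots> \<le> mu av \<rho> e" using mu_upper[OF nt E] \<rho>0 by simp
          finally show "av (f k n) \<le> mu av \<rho> e / \<rho>^k" using \<rho>0 by (simp add: pos_le_divide_eq)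
        qed
        thus ?thesis by simp
      qed
    qed
    thus ?thesis using \<rho>0 by (simp add: pos_le_divide_eq)
  qed
  have rep: "entire_repr av d (\<lambda>z. G (z+b))"
    unfolding entire_repr_def conv_abs_def
  proof (intro allI LIMSEQ_I)
    fix z and \<epsilon> :: real assume \<epsilon>: "0 < \<epsilon>"
    define \<rho> where "\<rho> = max (av b) (av z)"
    define t where "t n k = f k n * z^k" for n k
    have tb: "av (t n k) \<le> av (e n) * \<rho>^n" for n k
      unfolding t_def f_def using tb2[of b \<rho> "av z" e n k] unfolding \<rho>_def by (simp add: mult)
    have g: "(\<lambda>n. av (e n) * \<rho>^n) \<longlonglongrightarrow> 0" by (rule entire_terms0[OF nt E]) (simp add: \<rho>_def le_max_iff_disj)
    have "eventually (\<lambda>n. av (e n) * \<rho>^n < \<epsilon>/2) sequentially"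
      using order_tendstoD(2)[OF g, of "\<epsilon>/2"] \<epsilon> by linarith
    then obtain N where N: "\<And>n. n \<ge> N \<Longrightarrow> av (e n) * \<rho>^n < \<epsilon>/2"
      unfolding eventually_sequentially by blast
    have N': "av (e n) * \<rho>^n \<le> \<epsilon>/2" if "n \<ge> N" for n using N[OF that] by linarith
    define P where "P = (\<Sum>n<N. e n * (z+b)^n)"
    have GP: "av (G (z+b) - P) \<le> \<epsilon>/2"
    proof (rule conv_bound[where N=N])
      show "conv_abs av (\<lambda>M. \<Sum>n<M. e n * (z+b)^n) (G (z+b))" using E unfolding entire_repr_def by blast
      fix M assume NM: "N \<le> M"
      show "av ((\<Sum>n<M. e n * (z+b)^n) - P) \<le> \<epsilon>/2" unfolding P_def
      proof (rule tail_le[OF NM])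
        fix n assume Nn: "N \<le> n"
        have "av (z+b) \<le> \<rho>" using ultra[of z b] unfolding \<rho>_def by auto
        hence "av (e n) * av (z+b)^n \<le> av (e n) * \<rho>^n" by (intro mult_left_mono power_mono) auto
        thus "av (e n * (z+b)^n) \<le> \<epsilon>/2" using N'[OF Nn] by (simp add: mult)
      qed (use \<epsilon> in simp)
    qed
    show "\<exists>no. \<forall>K\<ge>no. norm (av ((\<Sum>k<K. d k * z^k) - G (z+b)) - 0) < \<epsilon>"
    proof (intro exI allI impI)
      fix K assume K: "N \<le> K"
      have Pswap: "P = (\<Sum>k<K. \<Sum>n<N. t n k)"
      proof -
        have "e n * (z+b)^n = (\<Sum>k<K. t n k)" if "n < N" for n
        proof -
          have "e n * (z+b)^n = (\<Sum>k\<le>n. t n k)"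
            unfolding t_def f_def binomial_ring by (simp add: sum_distrib_left mult_ac)
          also have "\<dots> = (\<Sum>k<K. t n k)"
            by (rule sum.mono_neutral_left) (use that K in \<open>auto simp: t_def f_def binomial_eq_0\<close>)
          finally show ?thesis .
        qed
        hence "P = (\<Sum>n<N. \<Sum>k<K. t n k)" unfolding P_def by simp
        also have "\<dots> = (\<Sum>k<K. \<Sum>n<N. t n k)" by (rule sum.swap)
        finally show ?thesis .
      qed
      have dz: "conv_abs av (\<lambda>M. \<Sum>n<M. t n k) (d k * z^k)" for k
        using conv_cmult_right[OF dc[of k], of "z^k"] unfolding t_def by (simp add: sum_distrib_right)
      have SP: "av ((\<Sum>k<K. d k * z^k) - P) \<le> \<epsilon>/2"
      proof -
        have "(\<Sum>k<K. d k * z^k) - P = (\<Sum>k<K. d k * z^k - (\<Sum>n<N. t n k))"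
          unfolding Pswap by (simp add: sum_subtractf)
        also have "av \<dots> \<le> \<epsilon>/2"
        proof (rule sum_le)
          fix k
          show "av (d k * z^k - (\<Sum>n<N. t n k)) \<le> \<epsilon>/2"
          proof (rule conv_bound[OF dz, where N=N])
            fix M assume NM: "N \<le> M"
            show "av ((\<Sum>n<M. t n k) - (\<Sum>n<N. t n k)) \<le> \<epsilon>/2"
            proof (rule tail_le[OF NM])
              fix n assume "N \<le> n"
              show "av (t n k) \<le> \<epsilon>/2" using order_trans[OF tb N'[OF \<open>N \<le> n\<close>]] .
            qed (use \<epsilon> in simp)
          qed
        qed (use \<epsilon> in simp)
        finally show ?thesis .
      qed
      have "av ((\<Sum>k<K. d k * z^k) - G (z+b)) \<le> max (av ((\<Sum>k<K. d k * z^k) - P)) (av (P - G (z+b)))"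
        by (rule diff_tri)
      also have "\<dots> \<le> \<epsilon>/2" using SP GP diff_comm[of "G (z+b)" P] by simp
      finally show "norm (av ((\<Sum>k<K. d k * z^k) - G (z+b)) - 0) < \<epsilon>" using \<epsilon> by simp
    qed
  qed
  show ?thesis using rep bound by blast
qed

end
context na begin

lemma compose: assumes nt: "nontrivial_abs av" and cp: "complete_abs av" and a: "a \<noteq> 0" "av a \<le> 1"
    and r: "r > av b / av a" and E: "entire_repr av e G"
  shows "\<exists>d. entire_repr av d (\<lambda>z. G (a*z+b)) \<and> mu av r d \<le> mu av r e"
proof -
  obtain d where d: "entire_repr av d (\<lambda>z. G (z+b))" "\<And>\<rho> k. av b < \<rho> \<Longrightarrow> av (d k) * \<rho>^k \<le> mu av \<rho> e"
    using translate[OF nt cp E, of b] by blast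
  have ap: "av a > 0" using a(1) nonneg[of a] zero_iff[of a] by linarith
  have rb: "av b < av a * r" using r ap by (simp add: pos_divide_less_eq mult.commute)
  have r0: "r \<ge> 0" using r ap nonneg[of b] by (smt (verit) divide_nonneg_pos)
  have "entire_repr av (\<lambda>n. d n * a^n) (\<lambda>z. G (a*z+b))" using entire_scale[OF d(1), of a] by simp
  moreover have "mu av r (\<lambda>n. d n * a^n) \<le> mu av r e"
  proof (rule mu_least)
    fix n
    have "av (d n * a^n) * r^n = av (d n) * (av a * r)^n" by (simp add: mult power_mult_distrib)
    also have "\<dots> \<le> mu av (av a * r) e" using d(2)[OF rb] .
    also have "\<dots> \<le> mu av r e"
      by (rule mu_mono[OF nt E]) (use r0 a(2) ap in \<open>auto intro: mult_left_le_one_le\<close>)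
    finally show "av (d n * a^n) * r^n \<le> mu av r e" .
  qed
  ultimately show ?thesis by blast
qed

lemma iter: assumes nt: "nontrivial_abs av" and cp: "complete_abs av" and a: "a \<noteq> 0" "av a \<le> 1"
    and r: "r > av b / av a" and E: "entire_repr av c F"
  shows "\<exists>d. entire_repr av d ((diffL (\<lambda>z. a * z + b) ^^ m) F) \<and> mu av r d \<le> mu av r c"
proof (induct m)
  case 0 show ?case using E by auto
next
  case (Suc m)
  define H where "H = (diffL (\<lambda>z. a * z + b) ^^ m) F"
  obtain d where d: "entire_repr av d H" "mu av r d \<le> mu av r c" using Suc unfolding H_def by blast
  obtain d' where d': "entire_repr av d' (\<lambda>z. H (a*z+b))" "mu av r d' \<le> mu av r d"
    using compose[OF nt cp a r d(1)] by blast
  have ap: "av a > 0" using a(1) nonneg[of a] zero_iff[of a] by linarith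
  have r0: "r \<ge> 0" using r ap nonneg[of b] by (smt (verit) divide_nonneg_pos)
  have "entire_repr av (\<lambda>n. d' n - d n) (\<lambda>z. H (a*z+b) - H z)" by (rule entire_diff[OF d'(1) d(1)])
  moreover have "(diffL (\<lambda>z. a * z + b) ^^ Suc m) F = (\<lambda>z. H (a*z+b) - H z)"
    unfolding H_def by (simp add: diffL_def)
  moreover have "mu av r (\<lambda>n. d' n - d n) \<le> mu av r c"
  proof (rule mu_least)
    fix n
    have 1: "av (d' n) * r^n \<le> mu av r c" using mu_upper[OF nt d'(1) r0, of n] d'(2) d(2) by linarith
    have 2: "av (d n) * r^n \<le> mu av r c" using mu_upper[OF nt d(1) r0, of n] d(2) by linarith
    have "av (d' n - d n) * r^n \<le> max (av (d' n)) (av (d n)) * r^n"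
      using diff_le r0 by (intro mult_right_mono) auto
    also have "\<dots> \<le> mu av r c" using 1 2 by (simp add: max_def)
    finally show "av (d' n - d n) * r^n \<le> mu av r c" .
  qed
  ultimately show ?case by auto
qed

end

theorem lemma2p1:
  fixes av :: "'k::field_char_0 \<Rightarrow> real"
    and a b :: 'k and c :: "nat \<Rightarrow> 'k" and F :: "'k \<Rightarrow> 'k" and m :: nat and r :: real
  assumes "nonarch_abs av" and "nontrivial_abs av" and "complete_abs av"
    and "alg_closed_field TYPE('k)"
    and "a \<noteq> 0" and "av a \<le> 1"
    and "entire_repr av c F" and "\<exists>z. F z \<noteq> 0"
    and "m > 0"
    and "r > av b / av a"
  shows "(\<exists>d. entire_repr av d (\<lambda>z. F (a * z + b)))
       \<and> (\<forall>d. entire_repr av d (\<lambda>z. F (a * z + b)) \<longrightarrow>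
              mu av r d \<le> mu av r c \<and> mu av r d / mu av r c \<le> 1)
       \<and> (\<exists>d. entire_repr av d ((diffL (\<lambda>z. a * z + b) ^^ m) F))
       \<and> (\<forall>d. entire_repr av d ((diffL (\<lambda>z. a * z + b) ^^ m) F) \<longrightarrow>
              mu av r d / mu av r c \<le> 1)"
proof -
  interpret na av by unfold_locales (rule assms(1))
  note nt = assms(2) and cp = assms(3) and a = assms(5,6) and E = assms(7) and r = assms(10)
  have ap: "av a > 0" using a(1) nonneg[of a] zero_iff[of a] by linarith
  have r0: "r > 0" using r ap nonneg[of b] by (smt (verit) divide_nonneg_pos)
  obtain z where Fz: "F z \<noteq> 0" using assms(8) by blast
  have mc: "mu av r c > 0" by (rule entire_nonzero[OF nt E Fz r0])
  obtain d0 where d0: "entire_repr av d0 (\<lambda>z. F (a*z+b))" "mu av r d0 \<le> mu av r c"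
    using compose[OF nt cp a r E] by blast
  have P2: "mu av r d \<le> mu av r c \<and> mu av r d / mu av r c \<le> 1"
    if "entire_repr av d (\<lambda>z. F (a * z + b))" for d
  proof -
    have "d = d0" by (rule entire_unique[OF nt that d0(1)])
    thus ?thesis using d0(2) mc by (simp add: pos_divide_le_eq)
  qed
  obtain dm where dm: "entire_repr av dm ((diffL (\<lambda>z. a * z + b) ^^ m) F)" "mu av r dm \<le> mu av r c"
    using iter[OF nt cp a r E] by blast
  have P4: "mu av r d / mu av r c \<le> 1"
    if "entire_repr av d ((diffL (\<lambda>z. a * z + b) ^^ m) F)" for d
  proof -
    have "d = dm" by (rule entire_unique[OF nt that dm(1)])
    thus ?thesis using dm(2) mc by (simp add: pos_divide_le_eq)
  qed
  show ?thesis using d0(1) P2 dm(1) P4 by blast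
qed

end
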